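(* In the supersample setting described in the context, assume the loss takes values in $\{0,1\}$ and let $\gamma\in(0,1)$. For any $C_1>0$, \[ \mathrm{Err}-C_1V(\gamma)\leq\frac{2+C_1\gamma^2}{n}\sum_{i=1}^n\mathbb E_{L^+_{i},\tilde{\varepsilon}_i}\left[\tilde{\varepsilon}_iL^+_{i}\right], \] where $\tilde{\varepsilon}_i=(-1)^{1-U_i}-\frac{C_1\gamma^2}{C_1\gamma^2+2}$ (a shifted Rademacher variable with mean $-\frac{C_1\gamma^2}{C_1\gamma^2+2}$).
   Context: Let $\mathcal Z=\mathcal X\times\mathcal Y$ and let $\mu$ be a distribution on $\mathcal Z$. A (possibly randomized) learning algorithm $\mathcal A$ maps a training sample in $\mathcal Z^n$ to a hypothesis $W\in\mathcal W$, and $\ell:\mathcal W\times\mathcal Z\to\{0,1\}$ is a loss. For $S=(Z_1,\dots,Z_n)\sim\mu^{n}$ and $W\sim P_{W|S}$, let $L_\mu=\mathbb E_W\mathbb E_{Z'\sim\mu}[\ell(W,Z')]$ (with $Z'$ independent of $(S,W)$), $L_S(w)=\frac1n\sum_i\ell(w,Z_i)$, $L_n=\mathbb E_{W,S}[L_S(W)]$ and $\mathrm{Err}=L_\mu-L_n$. The $\gamma$-variance is $V(\gamma)=\mathbb E_{W,S}\big[\frac1n\sum_{i=1}^n(\ell(W,Z_i)-(1+\gamma)L_S(W))^2\big]$. Supersample: $\widetilde Z=(\widetilde Z_{i,j})_{i\in\{1,\dots,n\},j\in\{0,1\}}$ with i.i.d. entries of law $\mu$; $U=(U_1,\dots,U_n)$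 uniform on $\{0,1\}^n$, independent of $\widetilde Z$; $W=\mathcal A(\widetilde Z_U)$ with $\widetilde Z_U=(\widetilde Z_{1,U_1},\dots,\widetilde Z_{n,U_n})$; $L_i^+=\ell(W,\widetilde Z_{i,0})$. *)

theory Defs
  imports "HOL-Probability.Probability"
begin

(* Training samples S = (Z_1,...,Z_n) are represented as extensional functions
   on {..<n} (index i ranges over 0..n-1 instead of 1..n). *)

definition sample_space :: "'z measure \<Rightarrow> nat \<Rightarrow> (nat \<Rightarrow> 'z) measure" where
  "sample_space \<mu> n = PiM {..<n} (\<lambda>_. \<mu>)"

definition joint_SW :: "'z measure \<Rightarrow> 'w measure \<Rightarrow> nat \<Rightarrow> ((nat \<Rightarrow> 'z) \<Rightarrow> 'w measure)
    \<Rightarrow> ((nat \<Rightarrow> 'z) \<times> 'w) measure" where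
  "joint_SW \<mu> Wm n K = sample_space \<mu> n \<bind>
      (\<lambda>s. distr (K s) (sample_space \<mu> n \<Otimes>\<^sub>M Wm) (\<lambda>w. (s, w)))"

definition emp_risk :: "('w \<Rightarrow> 'z \<Rightarrow> real) \<Rightarrow> nat \<Rightarrow> 'w \<Rightarrow> (nat \<Rightarrow> 'z) \<Rightarrow> real" where
  "emp_risk l n w s = (1 / real n) * (\<Sum>i<n. l w (s i))"

definition pop_risk :: "'z measure \<Rightarrow> 'w measure \<Rightarrow> nat \<Rightarrow> ((nat \<Rightarrow> 'z) \<Rightarrow> 'w measure)
    \<Rightarrow> ('w \<Rightarrow> 'z \<Rightarrow> real) \<Rightarrow> real" where
  "pop_risk \<mu> Wm n K l = (\<integral>sw. (\<integral>z. l (snd sw) z \<partial>\<mu>) \<partial>joint_SW \<mu> Wm n K)"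

definition train_risk :: "'z measure \<Rightarrow> 'w measure \<Rightarrow> nat \<Rightarrow> ((nat \<Rightarrow> 'z) \<Rightarrow> 'w measure)
    \<Rightarrow> ('w \<Rightarrow> 'z \<Rightarrow> real) \<Rightarrow> real" where
  "train_risk \<mu> Wm n K l = (\<integral>sw. emp_risk l n (snd sw) (fst sw) \<partial>joint_SW \<mu> Wm n K)"

definition gen_err :: "'z measure \<Rightarrow> 'w measure \<Rightarrow> nat \<Rightarrow> ((nat \<Rightarrow> 'z) \<Rightarrow> 'w measure)
    \<Rightarrow> ('w \<Rightarrow> 'z \<Rightarrow> real) \<Rightarrow> real" where
  "gen_err \<mu> Wm n K l = pop_risk \<mu> Wm n K l - train_risk \<mu> Wm n K l"

definition gamma_var :: "'z measure \<Rightarrow> 'w measure \<Rightarrow> nat \<Rightarrow> ((nat \<Rightarrow> 'z) \<Rightarrow> 'w measure)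
    \<Rightarrow> ('w \<Rightarrow> 'z \<Rightarrow> real) \<Rightarrow> real \<Rightarrow> real" where
  "gamma_var \<mu> Wm n K l \<gamma> = (\<integral>sw. (1 / real n) *
      (\<Sum>i<n. (l (snd sw) (fst sw i) - (1 + \<gamma>) * emp_risk l n (snd sw) (fst sw))\<^sup>2)
      \<partial>joint_SW \<mu> Wm n K)"

(* Supersample: Zt i = (Zt_{i,0}, Zt_{i,1}); U i = True encodes U_i = 1, False encodes U_i = 0 *)
definition supersample_space :: "'z measure \<Rightarrow> nat \<Rightarrow> (nat \<Rightarrow> 'z \<times> 'z) measure" where
  "supersample_space \<mu> n = PiM {..<n} (\<lambda>_. \<mu> \<Otimes>\<^sub>M \<mu>)"

definition mask_space :: "nat \<Rightarrow> (nat \<Rightarrow> bool) measure" where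
  "mask_space n = PiM {..<n} (\<lambda>_. measure_pmf (bernoulli_pmf (1/2)))"

definition select_sample :: "nat \<Rightarrow> (nat \<Rightarrow> 'z \<times> 'z) \<Rightarrow> (nat \<Rightarrow> bool) \<Rightarrow> (nat \<Rightarrow> 'z)" where
  "select_sample n zt u = restrict (\<lambda>i. if u i then snd (zt i) else fst (zt i)) {..<n}"

definition joint_ZUW :: "'z measure \<Rightarrow> 'w measure \<Rightarrow> nat \<Rightarrow> ((nat \<Rightarrow> 'z) \<Rightarrow> 'w measure)
    \<Rightarrow> (((nat \<Rightarrow> 'z \<times> 'z) \<times> (nat \<Rightarrow> bool)) \<times> 'w) measure" where
  "joint_ZUW \<mu> Wm n K = (supersample_space \<mu> n \<Otimes>\<^sub>M mask_space n) \<bind>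
      (\<lambda>zu. distr (K (select_sample n (fst zu) (snd zu)))
              ((supersample_space \<mu> n \<Otimes>\<^sub>M mask_space n) \<Otimes>\<^sub>M Wm) (\<lambda>w. (zu, w)))"

end

theory Submission
  imports Defs
begin


lemma integral_measurable_kernel2:
  fixes f :: "'a \<Rightarrow> 'b \<Rightarrow> real"
  assumes f[measurable]: "(\<lambda>(x, y). f x y) \<in> borel_measurable (M \<Otimes>\<^sub>M N)"
  assumes L[measurable]: "L \<in> measurable M (subprob_algebra N)"
  shows "(\<lambda>x. integral\<^sup>L (L x) (f x)) \<in> borel_measurable M"
proof -
  note integral_measurable_subprob_algebra[measurable]
  note measurable_distr2[measurable]
  have "(\<lambda>x. integral\<^sup>L (distr (L x) (M \<Otimes>\<^sub>M N) (\<lambda>y. (x, y))) (\<lambda>(x, y). f x y)) \<in> borel_measurable M"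
    by measurable
  then show ?thesis
  proof (rule measurable_cong[THEN iffD1, rotated])
    fix x assume x: "x \<in> space M"
    have s: "sets (L x) = sets N" by (rule sets_kernel[OF L x])
    have P: "(\<lambda>y. (x, y)) \<in> measurable (L x) (M \<Otimes>\<^sub>M N)"
      unfolding measurable_cong_sets[OF s refl] using x by (rule measurable_Pair1')
    have "integral\<^sup>L (distr (L x) (M \<Otimes>\<^sub>M N) (\<lambda>y. (x, y))) (\<lambda>(x, y). f x y) = (\<integral>y. (\<lambda>(x, y). f x y) (x, y) \<partial>L x)"
      by (rule integral_distr[OF P]) (rule f)
    then show "integral\<^sup>L (distr (L x) (M \<Otimes>\<^sub>M N) (\<lambda>y. (x, y))) (\<lambda>(x, y). f x y) = integral\<^sup>L (L x) (f x)"
      by simp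
  qed
qed

lemma integral_bind_kernel:
  fixes f :: "'a \<times> 'b \<Rightarrow> real"
  assumes M: "prob_space M" and K: "K \<in> M \<rightarrow>\<^sub>M prob_algebra N"
    and f[measurable]: "f \<in> borel_measurable (M \<Otimes>\<^sub>M N)"
    and B: "\<And>x. x \<in> space (M \<Otimes>\<^sub>M N) \<Longrightarrow> \<bar>f x\<bar> \<le> B"
  shows "integral\<^sup>L (M \<bind> (\<lambda>x. distr (K x) (M \<Otimes>\<^sub>M N) (\<lambda>w. (x, w)))) f = (\<integral>x. \<integral>y. f (x,y) \<partial>K x \<partial>M)"
proof -
  have K'[measurable]: "K \<in> M \<rightarrow>\<^sub>M subprob_algebra N" using K by (rule measurable_prob_algebraD)
  have D: "(\<lambda>x. distr (K x) (M \<Otimes>\<^sub>M N) (\<lambda>w. (x, w))) \<in> measurable M (subprob_algebra (M \<Otimes>\<^sub>M N))"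
  proof (rule measurable_distr2[where f="\<lambda>x w. (x, w)"])
    show "(\<lambda>(x, w). (x, w)) \<in> M \<Otimes>\<^sub>M N \<rightarrow>\<^sub>M M \<Otimes>\<^sub>M N" by simp
  qed (rule K')
  have "integral\<^sup>L (M \<bind> (\<lambda>x. distr (K x) (M \<Otimes>\<^sub>M N) (\<lambda>w. (x, w)))) f
     = (\<integral>x. integral\<^sup>L (distr (K x) (M \<Otimes>\<^sub>M N) (\<lambda>w. (x, w))) f \<partial>M)"
  proof (rule integral_bind[where K="M \<Otimes>\<^sub>M N" and B=B and B'=1])
    show "finite_measure M" using M by (simp add: prob_space_def)
    show "AE x in M. emeasure (distr (K x) (M \<Otimes>\<^sub>M N) (\<lambda>w. (x, w))) (space (distr (K x) (M \<Otimes>\<^sub>M N) (\<lambda>w. (x, w)))) \<le> ennreal 1"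
    proof (rule AE_I2)
      fix x assume x: "x \<in> space M"
      interpret subprob_space "distr (K x) (M \<Otimes>\<^sub>M N) (\<lambda>w. (x, w))"
        by (rule subprob_space_kernel[OF D x])
      show "emeasure (distr (K x) (M \<Otimes>\<^sub>M N) (\<lambda>w. (x, w))) (space (distr (K x) (M \<Otimes>\<^sub>M N) (\<lambda>w. (x, w)))) \<le> ennreal 1"
        using emeasure_space_le_1 by simp
    qed
    show "f \<in> borel_measurable (M \<Otimes>\<^sub>M N)" by (rule f)
    show "\<And>x. x \<in> space (M \<Otimes>\<^sub>M N) \<Longrightarrow> \<bar>f x\<bar> \<le> B" by (rule B)
    show "(\<lambda>x. distr (K x) (M \<Otimes>\<^sub>M N) (\<lambda>w. (x, w))) \<in> measurable M (subprob_algebra (M \<Otimes>\<^sub>M N))" by (rule D)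
  qed
  also have "\<dots> = (\<integral>x. \<integral>y. f (x,y) \<partial>K x \<partial>M)"
  proof (rule Bochner_Integration.integral_cong[OF refl])
    fix x assume x: "x \<in> space M"
    have s: "sets (K x) = sets N" by (rule sets_kernel[OF K' x])
    have P: "(\<lambda>y. (x, y)) \<in> measurable (K x) (M \<Otimes>\<^sub>M N)"
      unfolding measurable_cong_sets[OF s refl] using x by (rule measurable_Pair1')
    show "integral\<^sup>L (distr (K x) (M \<Otimes>\<^sub>M N) (\<lambda>w. (x, w))) f = (\<integral>y. f (x,y) \<partial>K x)"
      by (rule integral_distr[OF P f])
  qed
  finally show ?thesis .
qed

lemma prob_integral_abs_le:
  fixes f :: "'a \<Rightarrow> real"
  assumes M: "prob_space M" and f: "f \<in> borel_measurable M" and B: "\<And>x. x \<in> space M \<Longrightarrow> \<bar>f x\<bar> \<le> B"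
  shows "\<bar>integral\<^sup>L M f\<bar> \<le> B"
proof -
  interpret prob_space M by (rule M)
  have i: "integrable M f"
    by (rule integrable_const_bound[where B=B]) (use B f in auto)
  have "integral\<^sup>L M f \<le> B" using B by (intro integral_le_const[OF i] AE_I2) (fastforce simp: abs_le_iff)
  moreover have "- B \<le> integral\<^sup>L M f" using B by (intro integral_ge_const[OF i] AE_I2) (fastforce simp: abs_le_iff)
  ultimately show ?thesis by simp
qed

lemma prob_integrable_bound:
  fixes f :: "'a \<Rightarrow> real"
  assumes M: "prob_space M" and f: "f \<in> borel_measurable M" and B: "\<And>x. x \<in> space M \<Longrightarrow> \<bar>f x\<bar> \<le> B"
  shows "integrable M f"
proof -
  interpret prob_space M by (rule M)
  show ?thesis by (rule integrable_const_bound[where B=B]) (use B f in auto)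
qed

lemma var_ident:
  fixes x :: "nat \<Rightarrow> real" and g :: real
  assumes n: "n > 0" and x: "\<And>i. i < n \<Longrightarrow> x i \<in> {0,1}"
  shows "(1/real n) * (\<Sum>i<n. (x i - (1+g)*((1/real n) * (\<Sum>i<n. x i)))\<^sup>2)
         = (1/real n) * (\<Sum>i<n. x i) - (1-g\<^sup>2)*((1/real n) * (\<Sum>i<n. x i))\<^sup>2"
proof -
  define L where "L = (1/real n) * (\<Sum>i<n. x i)"
  define a where "a = 1 + g"
  have S: "(\<Sum>i<n. x i) = real n * L" using n unfolding L_def by simp
  have "(\<Sum>i<n. (x i - a*L)\<^sup>2) = (\<Sum>i<n. x i - 2*a*L*x i + (a*L)\<^sup>2)"
  proof (rule sum.cong[OF refl])
    fix i assume "i \<in> {..<n}"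
    then have "x i \<in> {0,1}" using x by simp
    then show "(x i - a*L)\<^sup>2 = x i - 2*a*L*x i + (a*L)\<^sup>2" by (auto simp: power2_eq_square algebra_simps)
  qed
  also have "\<dots> = (\<Sum>i<n. x i) - 2*a*L*(\<Sum>i<n. x i) + real n * (a*L)\<^sup>2"
    by (simp add: sum.distrib sum_subtractf sum_distrib_left)
  also have "\<dots> = real n * (L - 2*a*L*L + (a*L)\<^sup>2)" unfolding S by (simp add: algebra_simps)
  finally have "(1/real n) * (\<Sum>i<n. (x i - a*L)\<^sup>2) = L - 2*a*L*L + (a*L)\<^sup>2" using n by simp
  also have "\<dots> = L - (1-g\<^sup>2)*L\<^sup>2" unfolding a_def by (simp add: power2_eq_square algebra_simps)
  finally show ?thesis unfolding L_def a_def .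
qed

locale setting =
  fixes \<mu> :: "'z measure" and Wm :: "'w measure" and n :: nat
    and K :: "(nat \<Rightarrow> 'z) \<Rightarrow> 'w measure" and l :: "'w \<Rightarrow> 'z \<Rightarrow> real"
  assumes mu: "prob_space \<mu>"
    and npos: "n > 0"
    and K: "K \<in> sample_space \<mu> n \<rightarrow>\<^sub>M prob_algebra Wm"
    and lmeas: "(\<lambda>(w, z). l w z) \<in> borel_measurable (Wm \<Otimes>\<^sub>M \<mu>)"
    and l01: "\<And>w z. w \<in> space Wm \<Longrightarrow> z \<in> space \<mu> \<Longrightarrow> l w z \<in> {0, 1}"
begin

abbreviation "P \<equiv> sample_space \<mu> n"
abbreviation "Z \<equiv> supersample_space \<mu> n"
abbreviation "U \<equiv> mask_space n"

lemma K_sub: "K \<in> P \<rightarrow>\<^sub>M subprob_algebra Wm"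
  using K by (rule measurable_prob_algebraD)

lemma K_prob: "s \<in> space P \<Longrightarrow> prob_space (K s)"
  using measurable_space[OF K] by (simp add: space_prob_algebra)

lemma K_sets: "s \<in> space P \<Longrightarrow> sets (K s) = sets Wm"
  by (rule sets_kernel[OF K_sub])

lemma K_space: "s \<in> space P \<Longrightarrow> space (K s) = space Wm"
  by (rule subprob_measurableD(1)[OF K_sub])

lemma P_prob: "prob_space P"
  unfolding sample_space_def by (rule prob_space_PiM) (rule mu)

lemma Z_prob: "prob_space Z"
  unfolding supersample_space_def
  by (rule prob_space_PiM) (intro prob_space_pair mu)

lemma U_prob: "prob_space U"
  unfolding mask_space_def by (rule prob_space_PiM) (rule prob_space_measure_pmf)

lemma l_bound: "w \<in> space Wm \<Longrightarrow> z \<in> space \<mu> \<Longrightarrow> \<bar>l w z\<bar> \<le> 1"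
  using l01 by fastforce

lemma l_nonneg: "w \<in> space Wm \<Longrightarrow> z \<in> space \<mu> \<Longrightarrow> 0 \<le> l w z"
  using l01 by fastforce

lemma l_sq: "w \<in> space Wm \<Longrightarrow> z \<in> space \<mu> \<Longrightarrow> (l w z)\<^sup>2 = l w z"
  using l01 by fastforce

lemma l_comp:
  assumes g: "g \<in> M \<rightarrow>\<^sub>M Wm" and h: "h \<in> M \<rightarrow>\<^sub>M \<mu>"
  shows "(\<lambda>x. l (g x) (h x)) \<in> borel_measurable M"
proof -
  have "(\<lambda>x. (g x, h x)) \<in> M \<rightarrow>\<^sub>M Wm \<Otimes>\<^sub>M \<mu>" using g h by (rule measurable_Pair)
  from measurable_compose[OF this lmeas] show ?thesis by simp
qed

lemma comp_P: "i < n \<Longrightarrow> (\<lambda>s. s i) \<in> P \<rightarrow>\<^sub>M \<mu>"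
  unfolding sample_space_def by (rule measurable_component_singleton) simp

lemma space_P: "s \<in> space P \<Longrightarrow> i < n \<Longrightarrow> s i \<in> space \<mu>"
  unfolding sample_space_def by (auto simp: space_PiM)


lemma kint_meas:
  fixes f :: "(nat \<Rightarrow> 'z) \<times> 'w \<Rightarrow> real"
  assumes f: "f \<in> borel_measurable (P \<Otimes>\<^sub>M Wm)"
  shows "(\<lambda>s. \<integral>w. f (s, w) \<partial>K s) \<in> borel_measurable P"
  by (rule integral_measurable_kernel2[where f="\<lambda>s w. f (s, w)" and N=Wm]) (simp_all add: f K_sub)

lemma kint_inner_meas:
  fixes f :: "(nat \<Rightarrow> 'z) \<times> 'w \<Rightarrow> real"
  assumes f: "f \<in> borel_measurable (P \<Otimes>\<^sub>M Wm)" and s: "s \<in> space P"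
  shows "(\<lambda>w. f (s, w)) \<in> borel_measurable (K s)"
proof -
  have "(\<lambda>w. f (s, w)) \<in> borel_measurable Wm"
    using measurable_compose[OF measurable_Pair1'[OF s] f] by (simp add: comp_def)
  then show ?thesis by (simp add: measurable_cong_sets[OF K_sets[OF s] refl])
qed

lemma kint_bound:
  fixes f :: "(nat \<Rightarrow> 'z) \<times> 'w \<Rightarrow> real"
  assumes f: "f \<in> borel_measurable (P \<Otimes>\<^sub>M Wm)" and B: "\<And>x. x \<in> space (P \<Otimes>\<^sub>M Wm) \<Longrightarrow> \<bar>f x\<bar> \<le> B"
    and s: "s \<in> space P"
  shows "\<bar>\<integral>w. f (s, w) \<partial>K s\<bar> \<le> B"
  by (rule prob_integral_abs_le[OF K_prob[OF s] kint_inner_meas[OF f s]])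
     (use B s in \<open>auto simp: K_space[OF s] space_pair_measure\<close>)

lemma kint_inner_int:
  fixes f :: "(nat \<Rightarrow> 'z) \<times> 'w \<Rightarrow> real"
  assumes f: "f \<in> borel_measurable (P \<Otimes>\<^sub>M Wm)" and B: "\<And>x. x \<in> space (P \<Otimes>\<^sub>M Wm) \<Longrightarrow> \<bar>f x\<bar> \<le> B"
    and s: "s \<in> space P"
  shows "integrable (K s) (\<lambda>w. f (s, w))"
  by (rule prob_integrable_bound[OF K_prob[OF s] kint_inner_meas[OF f s]])
     (use B s in \<open>auto simp: K_space[OF s] space_pair_measure\<close>)

lemma kint_outer_int:
  fixes f :: "(nat \<Rightarrow> 'z) \<times> 'w \<Rightarrow> real"
  assumes f: "f \<in> borel_measurable (P \<Otimes>\<^sub>M Wm)" and B: "\<And>x. x \<in> space (P \<Otimes>\<^sub>M Wm) \<Longrightarrow> \<bar>f x\<bar> \<le> B"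
  shows "integrable P (\<lambda>s. \<integral>w. f (s, w) \<partial>K s)"
  by (rule prob_integrable_bound[OF P_prob kint_meas[OF f]]) (rule kint_bound[OF f B])

lemma SW_int:
  fixes f :: "(nat \<Rightarrow> 'z) \<times> 'w \<Rightarrow> real"
  assumes f: "f \<in> borel_measurable (P \<Otimes>\<^sub>M Wm)" and B: "\<And>x. x \<in> space (P \<Otimes>\<^sub>M Wm) \<Longrightarrow> \<bar>f x\<bar> \<le> B"
  shows "integral\<^sup>L (joint_SW \<mu> Wm n K) f = (\<integral>s. \<integral>w. f (s, w) \<partial>K s \<partial>P)"
  unfolding joint_SW_def by (rule integral_bind_kernel[OF P_prob K f B])

definition "Lz w = (\<integral>z. l w z \<partial>\<mu>)"

lemma Lz_meas: "Lz \<in> borel_measurable Wm"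
proof -
  interpret prob_space \<mu> by (rule mu)
  show ?thesis unfolding Lz_def[abs_def]
    by (rule borel_measurable_lebesgue_integral) (rule lmeas)
qed

lemma Lz_bound: "w \<in> space Wm \<Longrightarrow> \<bar>Lz w\<bar> \<le> 1"
  unfolding Lz_def
  by (rule prob_integral_abs_le[OF mu]) (auto intro!: l_comp l_bound)

lemma emp_meas: "(\<lambda>sw. emp_risk l n (snd sw) (fst sw)) \<in> borel_measurable (P \<Otimes>\<^sub>M Wm)"
  unfolding emp_risk_def
proof (intro borel_measurable_times borel_measurable_const borel_measurable_sum)
  fix i assume "i \<in> {..<n}"
  then show "(\<lambda>x. l (snd x) (fst x i)) \<in> borel_measurable (P \<Otimes>\<^sub>M Wm)"
    by (intro l_comp measurable_snd measurable_compose[OF measurable_fst comp_P]) simp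
qed

lemma emp_bounds:
  assumes "s \<in> space P" "w \<in> space Wm"
  shows "0 \<le> emp_risk l n w s" "emp_risk l n w s \<le> 1"
proof -
  have a: "0 \<le> l w (s i)" "l w (s i) \<le> 1" if "i < n" for i
    using l01[OF assms(2) space_P[OF assms(1) that]] by auto
  have "(\<Sum>i<n. l w (s i)) \<le> (\<Sum>i<n. 1)" by (rule sum_mono) (use a in auto)
  then have "(\<Sum>i<n. l w (s i)) \<le> real n" by simp
  moreover have "0 \<le> (\<Sum>i<n. l w (s i))" by (rule sum_nonneg) (use a in auto)
  ultimately show "0 \<le> emp_risk l n w s" "emp_risk l n w s \<le> 1"
    using npos unfolding emp_risk_def by (auto simp: field_simps)
qed

lemma emp_abs: "s \<in> space P \<Longrightarrow> w \<in> space Wm \<Longrightarrow> \<bar>emp_risk l n w s\<bar> \<le> 1"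
  using emp_bounds[of s w] by simp

lemma pop_eq: "pop_risk \<mu> Wm n K l = (\<integral>s. \<integral>w. Lz w \<partial>K s \<partial>P)"
proof -
  have "pop_risk \<mu> Wm n K l = integral\<^sup>L (joint_SW \<mu> Wm n K) (\<lambda>sw. Lz (snd sw))"
    unfolding pop_risk_def Lz_def ..
  also have "\<dots> = (\<integral>s. \<integral>w. Lz (snd (s, w)) \<partial>K s \<partial>P)"
    by (rule SW_int[where B=1]) (auto intro!: measurable_compose[OF measurable_snd Lz_meas] Lz_bound simp: space_pair_measure)
  finally show ?thesis by simp
qed

lemma train_eq: "train_risk \<mu> Wm n K l = (\<integral>s. \<integral>w. emp_risk l n w s \<partial>K s \<partial>P)"
proof -
  have "train_risk \<mu> Wm n K l = (\<integral>s. \<integral>w. emp_risk l n (snd (s, w)) (fst (s, w)) \<partial>K s \<partial>P)"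
    unfolding train_risk_def
    by (rule SW_int[where B=1, OF emp_meas]) (auto simp: space_pair_measure intro: emp_abs)
  then show ?thesis by simp
qed


definition "vfun g sw = (1 / real n) *
      (\<Sum>i<n. (l (snd sw) (fst sw i) - (1 + g) * emp_risk l n (snd sw) (fst sw))\<^sup>2)"

lemma vfun_meas: "vfun g \<in> borel_measurable (P \<Otimes>\<^sub>M Wm)"
  unfolding vfun_def[abs_def]
proof (intro borel_measurable_times borel_measurable_const borel_measurable_sum borel_measurable_power
    borel_measurable_diff emp_meas)
  fix i assume "i \<in> {..<n}"
  then show "(\<lambda>x. l (snd x) (fst x i)) \<in> borel_measurable (P \<Otimes>\<^sub>M Wm)"
    by (intro l_comp measurable_snd measurable_compose[OF measurable_fst comp_P]) simp
qed

lemma vfun_eq: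
  assumes "s \<in> space P" "w \<in> space Wm"
  shows "vfun g (s, w) = emp_risk l n w s - (1 - g\<^sup>2) * (emp_risk l n w s)\<^sup>2"
  unfolding vfun_def emp_risk_def fst_conv snd_conv
  by (rule var_ident[OF npos]) (use l01[OF assms(2) space_P[OF assms(1)]] in auto)

lemma vfun_abs:
  assumes "x \<in> space (P \<Otimes>\<^sub>M Wm)"
  shows "\<bar>vfun g x\<bar> \<le> 1 + \<bar>1 - g\<^sup>2\<bar>"
proof -
  obtain s w where x: "x = (s, w)" "s \<in> space P" "w \<in> space Wm" using assms by (auto simp: space_pair_measure)
  define L where "L = emp_risk l n w s"
  have L: "0 \<le> L" "L \<le> 1" unfolding L_def using emp_bounds[OF x(2,3)] by auto
  have "L\<^sup>2 \<le> 1" using L by (simp add: power_le_one)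
  moreover have "0 \<le> L\<^sup>2" by simp
  ultimately have "\<bar>(1 - g\<^sup>2) * L\<^sup>2\<bar> \<le> \<bar>1 - g\<^sup>2\<bar>"
    by (simp add: abs_mult mult_left_le)
  then show ?thesis unfolding x(1) vfun_eq[OF x(2,3)] L_def[symmetric] using L by linarith
qed

lemma gvar_eq: "gamma_var \<mu> Wm n K l g = (\<integral>s. \<integral>w. vfun g (s, w) \<partial>K s \<partial>P)"
  unfolding gamma_var_def vfun_def[symmetric, abs_def]
  by (rule SW_int[OF vfun_meas vfun_abs])

lemma gvar_ge:
  assumes g: "g\<^sup>2 \<le> 1"
  shows "g\<^sup>2 * train_risk \<mu> Wm n K l \<le> gamma_var \<mu> Wm n K l g"
proof -
  have em: "(\<lambda>sw. g\<^sup>2 * emp_risk l n (snd sw) (fst sw)) \<in> borel_measurable (P \<Otimes>\<^sub>M Wm)"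
    by (intro borel_measurable_times borel_measurable_const emp_meas)
  have eb: "\<bar>g\<^sup>2 * emp_risk l n (snd x) (fst x)\<bar> \<le> g\<^sup>2" if "x \<in> space (P \<Otimes>\<^sub>M Wm)" for x
    using that emp_abs[of "fst x" "snd x"] by (auto simp: space_pair_measure abs_mult mult_left_le)
  have "g\<^sup>2 * train_risk \<mu> Wm n K l = (\<integral>s. \<integral>w. g\<^sup>2 * emp_risk l n (snd (s,w)) (fst (s,w)) \<partial>K s \<partial>P)"
    unfolding train_eq by simp
  also have "\<dots> \<le> (\<integral>s. \<integral>w. vfun g (s, w) \<partial>K s \<partial>P)"
  proof (rule integral_mono)
    show "integrable P (\<lambda>s. \<integral>w. g\<^sup>2 * emp_risk l n (snd (s,w)) (fst (s,w)) \<partial>K s)"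
      by (rule kint_outer_int[OF em eb])
    show "integrable P (\<lambda>s. \<integral>w. vfun g (s, w) \<partial>K s)"
      by (rule kint_outer_int[OF vfun_meas vfun_abs])
    fix s assume s: "s \<in> space P"
    show "(\<integral>w. g\<^sup>2 * emp_risk l n (snd (s,w)) (fst (s,w)) \<partial>K s) \<le> (\<integral>w. vfun g (s, w) \<partial>K s)"
    proof (rule integral_mono)
      show "integrable (K s) (\<lambda>w. g\<^sup>2 * emp_risk l n (snd (s,w)) (fst (s,w)))"
        by (rule kint_inner_int[OF em eb s])
      show "integrable (K s) (\<lambda>w. vfun g (s, w))"
        by (rule kint_inner_int[OF vfun_meas vfun_abs s])
      fix w assume "w \<in> space (K s)"
      then have w: "w \<in> space Wm" using K_space[OF s] by simp
      define L where "L = emp_risk l n w s"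
      have L: "0 \<le> L" "L \<le> 1" unfolding L_def using emp_bounds[OF s w] by auto
      have "L\<^sup>2 \<le> L" using L by (simp add: power2_eq_square mult_left_le)
      then have "0 \<le> (1 - g\<^sup>2) * (L - L\<^sup>2)" using g by simp
      then show "g\<^sup>2 * emp_risk l n (snd (s,w)) (fst (s,w)) \<le> vfun g (s, w)"
        unfolding vfun_eq[OF s w] fst_conv snd_conv L_def[symmetric] by (simp add: algebra_simps)
    qed
  qed
  also have "\<dots> = gamma_var \<mu> Wm n K l g" by (rule gvar_eq[symmetric])
  finally show ?thesis .
qed


end


context setting begin
lemma comp_Z: "i < n \<Longrightarrow> (\<lambda>zt. zt i) \<in> Z \<rightarrow>\<^sub>M \<mu> \<Otimes>\<^sub>M \<mu>"
  unfolding supersample_space_def by (rule measurable_component_singleton) simp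

lemma space_Z:
  assumes zt: "zt \<in> space Z" and i: "i < n"
  shows "fst (zt i) \<in> space \<mu> \<and> snd (zt i) \<in> space \<mu>"
proof -
  have "zt \<in> PiE {..<n} (\<lambda>_. space (\<mu> \<Otimes>\<^sub>M \<mu>))" using zt unfolding supersample_space_def space_PiM .
  then have "zt i \<in> space (\<mu> \<Otimes>\<^sub>M \<mu>)" by (rule PiE_mem) (simp add: i)
  then have "zt i \<in> space \<mu> \<times> space \<mu>" by (simp add: space_pair_measure)
  then show ?thesis by (cases "zt i") simp
qed

lemma ucomp: "i < n \<Longrightarrow> (\<lambda>u. u i) \<in> U \<rightarrow>\<^sub>M count_space UNIV"
proof -
  assume i: "i < n"
  have "(\<lambda>u. u i) \<in> U \<rightarrow>\<^sub>M measure_pmf (bernoulli_pmf (1/2))"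
    unfolding mask_space_def by (rule measurable_component_singleton) (simp add: i)
  then show ?thesis by simp
qed

lemma pred_sets:
  assumes b: "b \<in> M \<rightarrow>\<^sub>M count_space UNIV"
  shows "{x \<in> space M. b x} \<in> sets M"
proof -
  have "{x \<in> space M. b x} = b -` {True} \<inter> space M" by auto
  then show ?thesis using measurable_sets[OF b, of "{True}"] by simp
qed

lemma sel_meas: "(\<lambda>zu. select_sample n (fst zu) (snd zu)) \<in> Z \<Otimes>\<^sub>M U \<rightarrow>\<^sub>M P"
  unfolding select_sample_def sample_space_def
proof (rule measurable_restrict)
  fix i assume "i \<in> {..<n}"
  then have i: "i < n" by simp
  show "(\<lambda>zu. if snd zu i then snd (fst zu i) else fst (fst zu i)) \<in> Z \<Otimes>\<^sub>M U \<rightarrow>\<^sub>M \<mu>"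
  proof (rule measurable_If)
    show "(\<lambda>zu. snd (fst zu i)) \<in> Z \<Otimes>\<^sub>M U \<rightarrow>\<^sub>M \<mu>"
      by (rule measurable_compose[OF measurable_compose[OF measurable_fst comp_Z[OF i]] measurable_snd])
    show "(\<lambda>zu. fst (fst zu i)) \<in> Z \<Otimes>\<^sub>M U \<rightarrow>\<^sub>M \<mu>"
      by (rule measurable_compose[OF measurable_compose[OF measurable_fst comp_Z[OF i]] measurable_fst])
    show "{x \<in> space (Z \<Otimes>\<^sub>M U). snd x i} \<in> sets (Z \<Otimes>\<^sub>M U)"
      by (rule pred_sets[OF measurable_compose[OF measurable_snd ucomp[OF i]]])
  qed
qed

lemma selu_meas: "(\<lambda>zt. select_sample n zt u) \<in> Z \<rightarrow>\<^sub>M P"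
  unfolding select_sample_def sample_space_def
proof (rule measurable_restrict)
  fix i assume "i \<in> {..<n}"
  then have i: "i < n" by simp
  show "(\<lambda>zt. if u i then snd (zt i) else fst (zt i)) \<in> Z \<rightarrow>\<^sub>M \<mu>"
    by (cases "u i") (simp_all add: measurable_compose[OF comp_Z[OF i] measurable_snd] measurable_compose[OF comp_Z[OF i] measurable_fst])
qed

lemma distr_sel: "distr Z P (\<lambda>zt. select_sample n zt u) = P"
proof -
  interpret PP: product_prob_space "\<lambda>_::nat. \<mu>"
    by (intro product_prob_spaceI) (rule mu)
  interpret PM: prob_space \<mu> by (rule mu)
  interpret MM: pair_sigma_finite \<mu> \<mu> ..
  interpret ZZ: product_prob_space "\<lambda>_::nat. \<mu> \<Otimes>\<^sub>M \<mu>"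
    by (intro product_prob_spaceI prob_space_pair) (rule mu)+
  show ?thesis unfolding sample_space_def
  proof (rule PP.PiM_eqI)
    show "finite {..<n}" by simp
    show "sets (distr Z (PiM {..<n} (\<lambda>_. \<mu>)) (\<lambda>zt. select_sample n zt u)) = sets (PiM {..<n} (\<lambda>_. \<mu>))"
      by simp
    fix A assume A: "\<And>i. i \<in> {..<n} \<Longrightarrow> A i \<in> sets \<mu>"
    define B where "B i = (if u i then space \<mu> \<times> A i else A i \<times> space \<mu>)" for i
    have Asp: "A i \<subseteq> space \<mu>" if "i < n" for i using A[of i] that sets.sets_into_space by auto
    have B: "B i \<in> sets (\<mu> \<Otimes>\<^sub>M \<mu>)" if "i \<in> {..<n}" for i
      using A[OF that] unfolding B_def by auto
    have pre: "(\<lambda>zt. select_sample n zt u) -` Pi\<^sub>E {..<n} A \<inter> space Z = Pi\<^sub>E {..<n} B"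
    proof (rule set_eqI)
      fix x
      have pt: "(x i \<in> space \<mu> \<times> space \<mu> \<and> (if u i then snd (x i) else fst (x i)) \<in> A i) \<longleftrightarrow> x i \<in> B i"
        if "i < n" for i
        using Asp[OF that] unfolding B_def by (cases "x i") auto
      have "x \<in> (\<lambda>zt. select_sample n zt u) -` Pi\<^sub>E {..<n} A \<inter> space Z \<longleftrightarrow>
          x \<in> extensional {..<n} \<and> (\<forall>i\<in>{..<n}. x i \<in> space \<mu> \<times> space \<mu>) \<and>
          (\<forall>i\<in>{..<n}. (if u i then snd (x i) else fst (x i)) \<in> A i)"
        unfolding supersample_space_def select_sample_def
        by (simp add: space_PiM space_pair_measure PiE_iff restrict_PiE_iff del: if_split) blast
      also have "\<dots> \<longleftrightarrow> x \<in> Pi\<^sub>E {..<n} B"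
        unfolding PiE_iff using pt by blast
      finally show "x \<in> (\<lambda>zt. select_sample n zt u) -` Pi\<^sub>E {..<n} A \<inter> space Z \<longleftrightarrow> x \<in> Pi\<^sub>E {..<n} B" .
    qed
    have "emeasure (distr Z (PiM {..<n} (\<lambda>_. \<mu>)) (\<lambda>zt. select_sample n zt u)) (Pi\<^sub>E {..<n} A)
        = emeasure Z ((\<lambda>zt. select_sample n zt u) -` Pi\<^sub>E {..<n} A \<inter> space Z)"
      by (rule emeasure_distr[OF selu_meas[unfolded sample_space_def]]) (use A in \<open>auto intro: sets_PiM_I_finite\<close>)
    also have "\<dots> = emeasure Z (Pi\<^sub>E {..<n} B)" by (simp only: pre)
    also have "\<dots> = (\<Prod>i\<in>{..<n}. emeasure (\<mu> \<Otimes>\<^sub>M \<mu>) (B i))"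
      unfolding supersample_space_def by (rule ZZ.emeasure_PiM) (simp_all add: B)
    also have "\<dots> = (\<Prod>i\<in>{..<n}. emeasure \<mu> (A i))"
    proof (rule prod.cong[OF refl])
      fix i assume i: "i \<in> {..<n}"
      show "emeasure (\<mu> \<Otimes>\<^sub>M \<mu>) (B i) = emeasure \<mu> (A i)"
      proof (cases "u i")
        case True
        then have "B i = space \<mu> \<times> A i" unfolding B_def by simp
        then show ?thesis using A[OF i] by (simp only:) (subst sigma_finite_measure.emeasure_pair_measure_Times[OF prob_space_imp_sigma_finite[OF mu]], simp_all add: prob_space.emeasure_space_1[OF mu])
      next
        case False
        then have "B i = A i \<times> space \<mu>" unfolding B_def by simp
        then show ?thesis using A[OF i] by (simp only:) (subst sigma_finite_measure.emeasure_pair_measure_Times[OF prob_space_imp_sigma_finite[OF mu]], simp_all add: prob_space.emeasure_space_1[OF mu])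
      qed
    qed
    finally show "emeasure (distr Z (PiM {..<n} (\<lambda>_. \<mu>)) (\<lambda>zt. select_sample n zt u)) (Pi\<^sub>E {..<n} A) = (\<Prod>i\<in>{..<n}. emeasure \<mu> (A i))" .
  qed
qed

end


context setting begin

definition "Gp sz = (\<integral>w. l w (snd sz) \<partial>K (fst sz))"
definition "Hf s = (\<integral>z. Gp (s, z) \<partial>\<mu>)"

lemma lw_meas:
  assumes s: "s \<in> space P" and z: "z \<in> space \<mu>"
  shows "(\<lambda>w. l w z) \<in> borel_measurable (K s)"
  by (rule l_comp[OF measurable_ident_sets[OF K_sets[OF s]] measurable_const[OF z]])

lemma Gp_meas: "Gp \<in> borel_measurable (P \<Otimes>\<^sub>M \<mu>)"
proof -
  have m: "(\<lambda>x. l (snd x) (snd (fst x))) \<in> borel_measurable ((P \<Otimes>\<^sub>M \<mu>) \<Otimes>\<^sub>M Wm)"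
    by (intro l_comp measurable_snd measurable_compose[OF measurable_fst measurable_snd])
  have e: "(\<lambda>(x, y). l y (snd x)) = (\<lambda>x. l (snd x) (snd (fst x)))" by (auto simp: fun_eq_iff)
  have "(\<lambda>x. integral\<^sup>L (K (fst x)) (\<lambda>w. l w (snd x))) \<in> borel_measurable (P \<Otimes>\<^sub>M \<mu>)"
    by (rule integral_measurable_kernel2[where N=Wm]) (simp_all only: e m measurable_compose[OF measurable_fst K_sub])
  then show ?thesis unfolding Gp_def[abs_def] .
qed

lemma Gp_bound:
  assumes s: "s \<in> space P" and z: "z \<in> space \<mu>"
  shows "\<bar>Gp (s, z)\<bar> \<le> 1"
  unfolding Gp_def fst_conv snd_conv
  by (rule prob_integral_abs_le[OF K_prob[OF s] lw_meas[OF s z]]) (simp add: K_space[OF s] l_bound z)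

lemma Hf_meas: "Hf \<in> borel_measurable P"
proof -
  interpret sigma_finite_measure \<mu> by (rule prob_space_imp_sigma_finite[OF mu])
  have "(\<lambda>(s, z). Gp (s, z)) \<in> borel_measurable (P \<Otimes>\<^sub>M \<mu>)" using Gp_meas by simp
  then show ?thesis unfolding Hf_def[abs_def] by (rule borel_measurable_lebesgue_integral)
qed

lemma Hf_bound: "s \<in> space P \<Longrightarrow> \<bar>Hf s\<bar> \<le> 1"
  unfolding Hf_def
  by (rule prob_integral_abs_le[OF mu]) (auto intro!: Gp_bound measurable_compose[OF measurable_Pair1' Gp_meas])

lemma Hf_eq:
  assumes s: "s \<in> space P"
  shows "Hf s = (\<integral>w. Lz w \<partial>K s)"
proof -
  interpret pair_sigma_finite \<mu> "K s"
    unfolding pair_sigma_finite_def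
    using prob_space_imp_sigma_finite[OF mu] prob_space_imp_sigma_finite[OF K_prob[OF s]] by simp
  have m0: "(\<lambda>x. l (snd x) (fst x)) \<in> borel_measurable (\<mu> \<Otimes>\<^sub>M Wm)"
    by (intro l_comp measurable_snd measurable_fst)
  have m: "(\<lambda>x. l (snd x) (fst x)) \<in> borel_measurable (\<mu> \<Otimes>\<^sub>M K s)"
    using m0 by (simp only: measurable_cong_sets[OF sets_pair_measure_cong[OF refl K_sets[OF s]] refl])
  have "integrable (\<mu> \<Otimes>\<^sub>M K s) (\<lambda>x. l (snd x) (fst x))"
  proof (rule prob_integrable_bound[OF prob_space_pair[OF mu K_prob[OF s]] m])
    fix x assume "x \<in> space (\<mu> \<Otimes>\<^sub>M K s)"
    then show "\<bar>l (snd x) (fst x)\<bar> \<le> 1" by (auto simp: space_pair_measure K_space[OF s] intro!: l_bound)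
  qed
  then have i: "integrable (\<mu> \<Otimes>\<^sub>M K s) (\<lambda>(z, w). l w z)" by (simp add: case_prod_beta')
  have "(\<integral>w. \<integral>z. l w z \<partial>\<mu> \<partial>K s) = (\<integral>z. \<integral>w. l w z \<partial>K s \<partial>\<mu>)"
    by (rule Fubini_integral[OF i])
  then show ?thesis unfolding Hf_def Gp_def Lz_def by simp
qed

lemma pop_eq2: "pop_risk \<mu> Wm n K l = (\<integral>s. Hf s \<partial>P)"
  unfolding pop_eq by (rule Bochner_Integration.integral_cong[OF refl]) (simp add: Hf_eq)


lemma selu_space: "zt \<in> space Z \<Longrightarrow> select_sample n zt u \<in> space P"
  by (rule measurable_space[OF selu_meas])

lemma L2:
  assumes i: "i < n" and ui: "u i"
  shows "(\<integral>zt. Gp (select_sample n zt u, fst (zt i)) \<partial>Z) = (\<integral>zt. Hf (select_sample n zt u) \<partial>Z)"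
proof -
  define J where "J = {..<n} - {i}"
  have IJ: "insert i J = {..<n}" using i unfolding J_def by auto
  have iJ: "i \<notin> J" and fJ: "finite J" unfolding J_def by auto
  interpret ZZ: product_prob_space "\<lambda>_::nat. \<mu> \<Otimes>\<^sub>M \<mu>"
    by (intro product_prob_spaceI prob_space_pair) (rule mu)+
  interpret MM: pair_sigma_finite \<mu> \<mu>
    unfolding pair_sigma_finite_def using prob_space_imp_sigma_finite[OF mu] by simp
  have Zeq: "Z = PiM (insert i J) (\<lambda>_. \<mu> \<Otimes>\<^sub>M \<mu>)" unfolding IJ supersample_space_def ..
  have F1m: "(\<lambda>zt. Gp (select_sample n zt u, fst (zt i))) \<in> borel_measurable Z"
    by (rule measurable_compose[OF measurable_Pair[OF selu_meas measurable_compose[OF comp_Z[OF i] measurable_fst]] Gp_meas])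
  have F2m: "(\<lambda>zt. Hf (select_sample n zt u)) \<in> borel_measurable Z"
    by (rule measurable_compose[OF selu_meas Hf_meas])
  have F1i: "integrable Z (\<lambda>zt. Gp (select_sample n zt u, fst (zt i)))"
  proof (rule prob_integrable_bound[where B=1, OF Z_prob F1m])
    fix x assume x: "x \<in> space Z"
    show "\<bar>Gp (select_sample n x u, fst (x i))\<bar> \<le> 1"
      using Gp_bound[OF selu_space[OF x] conjunct1[OF space_Z[OF x i]]] .
  qed
  have F2i: "integrable Z (\<lambda>zt. Hf (select_sample n zt u))"
  proof (rule prob_integrable_bound[where B=1, OF Z_prob F2m])
    fix x assume x: "x \<in> space Z"
    show "\<bar>Hf (select_sample n x u)\<bar> \<le> 1"
      using Hf_bound[OF selu_space[OF x]] .
  qed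
  have "(\<integral>zt. Gp (select_sample n zt u, fst (zt i)) \<partial>Z)
     = (\<integral>x. (\<integral>y. Gp (select_sample n (x(i:=y)) u, fst ((x(i:=y)) i)) \<partial>(\<mu> \<Otimes>\<^sub>M \<mu>)) \<partial>PiM J (\<lambda>_. \<mu> \<Otimes>\<^sub>M \<mu>))"
    unfolding Zeq by (rule ZZ.product_integral_insert[OF fJ iJ F1i[unfolded Zeq]])
  also have "\<dots> = (\<integral>x. (\<integral>y. Hf (select_sample n (x(i:=y)) u) \<partial>(\<mu> \<Otimes>\<^sub>M \<mu>)) \<partial>PiM J (\<lambda>_. \<mu> \<Otimes>\<^sub>M \<mu>))"
  proof (rule Bochner_Integration.integral_cong[OF refl])
    fix x assume x: "x \<in> space (PiM J (\<lambda>_. \<mu> \<Otimes>\<^sub>M \<mu>))"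
    define S where "S b = select_sample n (x(i:=(b,b))) u" for b
    have Sx: "select_sample n (x(i:=y)) u = S (snd y)" for y
      unfolding S_def select_sample_def using ui by (auto simp: fun_eq_iff)
    have dm: "(\<lambda>b. (b, b)) \<in> \<mu> \<rightarrow>\<^sub>M \<mu> \<Otimes>\<^sub>M \<mu>"
      by (rule measurable_Pair; rule measurable_ident_sets[OF refl])
    have um: "(\<lambda>v. x(i := v)) \<in> (\<mu> \<Otimes>\<^sub>M \<mu>) \<rightarrow>\<^sub>M Z"
      unfolding Zeq by (rule measurable_component_update[OF x iJ])
    have Sm: "S \<in> \<mu> \<rightarrow>\<^sub>M P"
      unfolding S_def[abs_def] by (rule measurable_compose[OF measurable_compose[OF dm um] selu_meas])
    have Ssp: "b \<in> space \<mu> \<Longrightarrow> S b \<in> space P" for b by (rule measurable_space[OF Sm])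
    have g1m: "(\<lambda>p. Gp (S (snd p), fst p)) \<in> borel_measurable (\<mu> \<Otimes>\<^sub>M \<mu>)"
      by (rule measurable_compose[OF measurable_Pair[OF measurable_compose[OF measurable_snd Sm] measurable_fst] Gp_meas])
    have g1i: "integrable (\<mu> \<Otimes>\<^sub>M \<mu>) (\<lambda>(a, b). Gp (S b, a))"
    proof -
      have "integrable (\<mu> \<Otimes>\<^sub>M \<mu>) (\<lambda>p. Gp (S (snd p), fst p))"
        by (rule prob_integrable_bound[OF prob_space_pair[OF mu mu] g1m])
           (auto simp: space_pair_measure intro!: Gp_bound Ssp)
      then show ?thesis by (simp add: case_prod_beta')
    qed
    have g2m: "(\<lambda>p. Hf (S (snd p))) \<in> borel_measurable (\<mu> \<Otimes>\<^sub>M \<mu>)"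
      by (rule measurable_compose[OF measurable_compose[OF measurable_snd Sm] Hf_meas])
    have g2i: "integrable (\<mu> \<Otimes>\<^sub>M \<mu>) (\<lambda>(a, b). Hf (S b))"
    proof -
      have "integrable (\<mu> \<Otimes>\<^sub>M \<mu>) (\<lambda>p. Hf (S (snd p)))"
        by (rule prob_integrable_bound[OF prob_space_pair[OF mu mu] g2m])
           (auto simp: space_pair_measure intro!: Hf_bound Ssp)
      then show ?thesis by (simp add: case_prod_beta')
    qed
    have "(\<integral>y. Gp (select_sample n (x(i:=y)) u, fst ((x(i:=y)) i)) \<partial>(\<mu> \<Otimes>\<^sub>M \<mu>))
        = (\<integral>y. (\<lambda>(a, b). Gp (S b, a)) y \<partial>(\<mu> \<Otimes>\<^sub>M \<mu>))"
      by (rule Bochner_Integration.integral_cong[OF refl]) (simp add: Sx case_prod_beta')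
    also have "\<dots> = (\<integral>b. \<integral>a. Gp (S b, a) \<partial>\<mu> \<partial>\<mu>)"
      by (rule MM.integral_snd[OF g1i, symmetric])
    also have "\<dots> = (\<integral>b. Hf (S b) \<partial>\<mu>)" unfolding Hf_def ..
    also have "\<dots> = (\<integral>b. \<integral>a. Hf (S b) \<partial>\<mu> \<partial>\<mu>)"
      by (simp add: prob_space.prob_space[OF mu])
    also have "\<dots> = (\<integral>y. (\<lambda>(a, b). Hf (S b)) y \<partial>(\<mu> \<Otimes>\<^sub>M \<mu>))"
      by (rule MM.integral_snd[OF g2i])
    also have "\<dots> = (\<integral>y. Hf (select_sample n (x(i:=y)) u) \<partial>(\<mu> \<Otimes>\<^sub>M \<mu>))"
      by (rule Bochner_Integration.integral_cong[OF refl]) (simp add: Sx case_prod_beta')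
    finally show "(\<integral>y. Gp (select_sample n (x(i:=y)) u, fst ((x(i:=y)) i)) \<partial>(\<mu> \<Otimes>\<^sub>M \<mu>))
        = (\<integral>y. Hf (select_sample n (x(i:=y)) u) \<partial>(\<mu> \<Otimes>\<^sub>M \<mu>))" .
  qed
  also have "\<dots> = (\<integral>zt. Hf (select_sample n zt u) \<partial>Z)"
    unfolding Zeq by (rule ZZ.product_integral_insert[OF fJ iJ F2i[unfolded Zeq], symmetric])
  finally show ?thesis .
qed

definition "Qi i s = (\<integral>w. l w (s i) \<partial>K s)"
definition "tr i = (\<integral>s. Qi i s \<partial>P)"

lemma Qi_meas: "i < n \<Longrightarrow> Qi i \<in> borel_measurable P"
proof -
  assume i: "i < n"
  have "(\<lambda>sw. l (snd sw) (fst sw i)) \<in> borel_measurable (P \<Otimes>\<^sub>M Wm)"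
    by (intro l_comp measurable_snd measurable_compose[OF measurable_fst comp_P[OF i]])
  from kint_meas[OF this] show ?thesis unfolding Qi_def[abs_def] by simp
qed

lemma ZR_true:
  assumes i: "i < n" and ui: "u i"
  shows "(\<integral>zt. (\<integral>w. l w (fst (zt i)) \<partial>K (select_sample n zt u)) \<partial>Z) = pop_risk \<mu> Wm n K l"
proof -
  have "(\<integral>zt. (\<integral>w. l w (fst (zt i)) \<partial>K (select_sample n zt u)) \<partial>Z)
      = (\<integral>zt. Gp (select_sample n zt u, fst (zt i)) \<partial>Z)" unfolding Gp_def by simp
  also have "\<dots> = (\<integral>zt. Hf (select_sample n zt u) \<partial>Z)" by (rule L2[of i u, OF i ui])
  also have "\<dots> = integral\<^sup>L (distr Z P (\<lambda>zt. select_sample n zt u)) Hf"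
    by (rule integral_distr[OF selu_meas Hf_meas, symmetric])
  also have "\<dots> = pop_risk \<mu> Wm n K l" unfolding distr_sel pop_eq2 ..
  finally show ?thesis .
qed

lemma ZR_false:
  assumes i: "i < n" and ui: "\<not> u i"
  shows "(\<integral>zt. (\<integral>w. l w (fst (zt i)) \<partial>K (select_sample n zt u)) \<partial>Z) = tr i"
proof -
  have "(\<integral>zt. (\<integral>w. l w (fst (zt i)) \<partial>K (select_sample n zt u)) \<partial>Z)
      = (\<integral>zt. Qi i (select_sample n zt u) \<partial>Z)"
    by (rule Bochner_Integration.integral_cong[OF refl]) (simp add: Qi_def select_sample_def i ui)
  also have "\<dots> = integral\<^sup>L (distr Z P (\<lambda>zt. select_sample n zt u)) (Qi i)"
    by (rule integral_distr[OF selu_meas Qi_meas[OF i], symmetric])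
  also have "\<dots> = tr i" unfolding distr_sel tr_def ..
  finally show ?thesis .
qed

end


lemma abs_mult_le1: "\<bar>a\<bar> \<le> A \<Longrightarrow> \<bar>b\<bar> \<le> 1 \<Longrightarrow> \<bar>a\<bar> * \<bar>b\<bar> \<le> (A::real)"
proof -
  assume a: "\<bar>a\<bar> \<le> A" and b: "\<bar>b\<bar> \<le> 1"
  have "\<bar>a\<bar> * \<bar>b\<bar> \<le> \<bar>a\<bar> * 1" by (rule mult_left_mono[OF b]) simp
  then show ?thesis using a by simp
qed

context setting begin

lemma U_comp_int:
  fixes h :: "bool \<Rightarrow> real"
  assumes i: "i < n"
  shows "(\<integral>u. h (u i) \<partial>U) = (h True + h False) / 2"
proof -
  have d: "distr U (measure_pmf (bernoulli_pmf (1/2))) (\<lambda>u. u i) = measure_pmf (bernoulli_pmf (1/2))"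
    unfolding mask_space_def by (rule distr_PiM_component) (simp_all add: prob_space_measure_pmf i)
  have m: "(\<lambda>u. u i) \<in> U \<rightarrow>\<^sub>M measure_pmf (bernoulli_pmf (1/2))"
    unfolding mask_space_def by (rule measurable_component_singleton) (simp add: i)
  have hm: "h \<in> borel_measurable (measure_pmf (bernoulli_pmf (1/2)))" by simp
  have "(\<integral>u. h (u i) \<partial>U) = integral\<^sup>L (measure_pmf (bernoulli_pmf (1/2))) h"
    using integral_distr[OF m hm] d by simp
  also have "\<dots> = (\<Sum>b\<in>UNIV. h b * pmf (bernoulli_pmf (1/2)) b)"
    by (rule integral_measure_pmf_real) simp_all
  also have "\<dots> = (h True + h False) / 2" by (simp add: UNIV_bool)
  finally show ?thesis .
qed

lemma KZ_meas: "(\<lambda>zu. K (select_sample n (fst zu) (snd zu))) \<in> Z \<Otimes>\<^sub>M U \<rightarrow>\<^sub>M prob_algebra Wm"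
  by (rule measurable_compose[OF sel_meas K])

lemma KZ_sub: "(\<lambda>zu. K (select_sample n (fst zu) (snd zu))) \<in> Z \<Otimes>\<^sub>M U \<rightarrow>\<^sub>M subprob_algebra Wm"
  by (rule measurable_prob_algebraD[OF KZ_meas])

lemma bool_fun_meas:
  fixes h :: "bool \<Rightarrow> real"
  assumes b: "b \<in> M \<rightarrow>\<^sub>M count_space UNIV"
  shows "(\<lambda>x. h (b x)) \<in> borel_measurable M"
  by (rule measurable_compose[OF b]) simp

lemma T_eq:
  fixes c :: real
  assumes i: "i < n"
  shows "(\<integral>zuw. ((if snd (fst zuw) i then 1 else -1) - c) * l (snd zuw) (fst (fst (fst zuw) i)) \<partial>joint_ZUW \<mu> Wm n K)
     = (1/2) * ((1 - c) * pop_risk \<mu> Wm n K l) + (1/2) * ((-1 - c) * tr i)"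
proof -
  define e where "e b = (if b then 1 else -1) - c" for b :: bool
  have eb: "\<bar>e b\<bar> \<le> 1 + \<bar>c\<bar>" for b unfolding e_def by auto
  define R where "R zu = (\<integral>w. l w (fst (fst zu i)) \<partial>K (select_sample n (fst zu) (snd zu)))" for zu
  have fm: "(\<lambda>zuw. e (snd (fst zuw) i) * l (snd zuw) (fst (fst (fst zuw) i))) \<in> borel_measurable ((Z \<Otimes>\<^sub>M U) \<Otimes>\<^sub>M Wm)"
  proof (rule borel_measurable_times)
    show "(\<lambda>zuw. e (snd (fst zuw) i)) \<in> borel_measurable ((Z \<Otimes>\<^sub>M U) \<Otimes>\<^sub>M Wm)"
      by (rule bool_fun_meas[OF measurable_compose[OF measurable_compose[OF measurable_fst measurable_snd] ucomp[OF i]]])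
    show "(\<lambda>zuw. l (snd zuw) (fst (fst (fst zuw) i))) \<in> borel_measurable ((Z \<Otimes>\<^sub>M U) \<Otimes>\<^sub>M Wm)"
      by (intro l_comp measurable_snd measurable_compose[OF measurable_compose[OF measurable_compose[OF measurable_fst measurable_fst] comp_Z[OF i]] measurable_fst])
  qed
  have fb: "\<bar>e (snd (fst x) i) * l (snd x) (fst (fst (fst x) i))\<bar> \<le> 1 + \<bar>c\<bar>"
    if x: "x \<in> space ((Z \<Otimes>\<^sub>M U) \<Otimes>\<^sub>M Wm)" for x
  proof -
    have w: "snd x \<in> space Wm" and zt: "fst (fst x) \<in> space Z" using x by (auto simp: space_pair_measure)
    have "\<bar>l (snd x) (fst (fst (fst x) i))\<bar> \<le> 1" using l_bound[OF w conjunct1[OF space_Z[OF zt i]]] .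
    then show ?thesis unfolding abs_mult by (rule abs_mult_le1[OF eb])
  qed
  have "(\<integral>zuw. ((if snd (fst zuw) i then 1 else -1) - c) * l (snd zuw) (fst (fst (fst zuw) i)) \<partial>joint_ZUW \<mu> Wm n K)
      = integral\<^sup>L (joint_ZUW \<mu> Wm n K) (\<lambda>zuw. e (snd (fst zuw) i) * l (snd zuw) (fst (fst (fst zuw) i)))"
    unfolding e_def ..
  also have "\<dots> = (\<integral>zu. \<integral>w. e (snd (fst (zu, w)) i) * l (snd (zu, w)) (fst (fst (fst (zu, w)) i)) \<partial>K (select_sample n (fst zu) (snd zu)) \<partial>(Z \<Otimes>\<^sub>M U))"
    unfolding joint_ZUW_def
    by (rule integral_bind_kernel[OF prob_space_pair[OF Z_prob U_prob] KZ_meas fm fb])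
  also have "\<dots> = (\<integral>zu. e (snd zu i) * R zu \<partial>(Z \<Otimes>\<^sub>M U))"
    unfolding R_def by simp
  also have "\<dots> = (\<integral>u. \<integral>zt. e (u i) * R (zt, u) \<partial>Z \<partial>U)"
  proof -
    interpret ZU: pair_sigma_finite Z U
      unfolding pair_sigma_finite_def using prob_space_imp_sigma_finite[OF Z_prob] prob_space_imp_sigma_finite[OF U_prob] by simp
    have Rm: "R \<in> borel_measurable (Z \<Otimes>\<^sub>M U)"
    proof -
      have e1: "(\<lambda>(x, y). l y (fst (fst x i))) = (\<lambda>x. l (snd x) (fst (fst (fst x) i)))" by (auto simp: fun_eq_iff)
      have "(\<lambda>x. l (snd x) (fst (fst (fst x) i))) \<in> borel_measurable ((Z \<Otimes>\<^sub>M U) \<Otimes>\<^sub>M Wm)"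
        by (intro l_comp measurable_snd measurable_compose[OF measurable_compose[OF measurable_compose[OF measurable_fst measurable_fst] comp_Z[OF i]] measurable_fst])
      then have "(\<lambda>zu. integral\<^sup>L (K (select_sample n (fst zu) (snd zu))) (\<lambda>w. l w (fst (fst zu i)))) \<in> borel_measurable (Z \<Otimes>\<^sub>M U)"
        by (intro integral_measurable_kernel2[where N=Wm] KZ_sub) (simp only: e1)
      then show ?thesis unfolding R_def[abs_def] .
    qed
    have Rb: "\<bar>R zu\<bar> \<le> 1" if zu: "zu \<in> space (Z \<Otimes>\<^sub>M U)" for zu
    proof -
      have zt: "fst zu \<in> space Z" using zu by (auto simp: space_pair_measure)
      have s: "select_sample n (fst zu) (snd zu) \<in> space P" by (rule selu_space[OF zt])
      show ?thesis unfolding R_def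
        by (rule prob_integral_abs_le[OF K_prob[OF s] lw_meas[OF s conjunct1[OF space_Z[OF zt i]]]])
           (simp add: K_space[OF s] l_bound conjunct1[OF space_Z[OF zt i]])
    qed
    have gm: "(\<lambda>zu. e (snd zu i) * R zu) \<in> borel_measurable (Z \<Otimes>\<^sub>M U)"
      by (intro borel_measurable_times Rm bool_fun_meas[OF measurable_compose[OF measurable_snd ucomp[OF i]]])
    have gi: "integrable (Z \<Otimes>\<^sub>M U) (\<lambda>zu. e (snd zu i) * R zu)"
    proof (rule prob_integrable_bound[where B="1 + \<bar>c\<bar>", OF prob_space_pair[OF Z_prob U_prob] gm])
      fix zu assume zu: "zu \<in> space (Z \<Otimes>\<^sub>M U)"
      show "\<bar>e (snd zu i) * R zu\<bar> \<le> 1 + \<bar>c\<bar>" unfolding abs_mult using eb[of "snd zu i"] Rb[OF zu]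
        by (rule abs_mult_le1)
    qed
    then have gi': "integrable (Z \<Otimes>\<^sub>M U) (\<lambda>(zt, u). e (u i) * R (zt, u))" by (simp add: case_prod_beta')
    have "(\<integral>u. \<integral>zt. e (u i) * R (zt, u) \<partial>Z \<partial>U) = integral\<^sup>L (Z \<Otimes>\<^sub>M U) (\<lambda>(zt, u). e (u i) * R (zt, u))"
      by (rule ZU.integral_snd[OF gi'])
    then show ?thesis by (simp add: case_prod_beta')
  qed
  also have "\<dots> = (\<integral>u. e (u i) * (if u i then pop_risk \<mu> Wm n K l else tr i) \<partial>U)"
  proof (rule Bochner_Integration.integral_cong[OF refl])
    fix u assume "u \<in> space U"
    have "(\<integral>zt. R (zt, u) \<partial>Z) = (if u i then pop_risk \<mu> Wm n K l else tr i)"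
      unfolding R_def fst_conv snd_conv
      using ZR_true[of i u, OF i] ZR_false[of i u, OF i] by (cases "u i") simp_all
    then show "(\<integral>zt. e (u i) * R (zt, u) \<partial>Z) = e (u i) * (if u i then pop_risk \<mu> Wm n K l else tr i)"
      by simp
  qed
  also have "\<dots> = (1/2) * ((1 - c) * pop_risk \<mu> Wm n K l) + (1/2) * ((-1 - c) * tr i)"
    by (subst U_comp_int[OF i, where h="\<lambda>b. e b * (if b then pop_risk \<mu> Wm n K l else tr i)"]) (simp add: e_def field_simps)
  finally show ?thesis .
qed

end


context setting begin

lemma Qi_bound: "i < n \<Longrightarrow> s \<in> space P \<Longrightarrow> \<bar>Qi i s\<bar> \<le> 1"
  unfolding Qi_def
  by (rule prob_integral_abs_le[OF K_prob lw_meas[OF _ space_P]]) (simp_all add: K_space l_bound space_P)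

lemma train_tr: "train_risk \<mu> Wm n K l = (1 / real n) * (\<Sum>i<n. tr i)"
proof -
  have "train_risk \<mu> Wm n K l = (\<integral>s. (1 / real n) * (\<Sum>i<n. Qi i s) \<partial>P)"
    unfolding train_eq
  proof (rule Bochner_Integration.integral_cong[OF refl])
    fix s assume s: "s \<in> space P"
    have "(\<integral>w. emp_risk l n w s \<partial>K s) = (1 / real n) * (\<integral>w. (\<Sum>i<n. l w (s i)) \<partial>K s)"
      unfolding emp_risk_def by simp
    also have "(\<integral>w. (\<Sum>i<n. l w (s i)) \<partial>K s) = (\<Sum>i<n. Qi i s)"
      unfolding Qi_def
    proof (rule Bochner_Integration.integral_sum)
      fix i assume "i \<in> {..<n}"
      then have i: "i < n" by simp
      show "integrable (K s) (\<lambda>w. l w (s i))"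
        by (rule prob_integrable_bound[where B=1, OF K_prob[OF s] lw_meas[OF s space_P[OF s i]]])
           (simp add: K_space[OF s] l_bound space_P[OF s i])
    qed
    finally show "(\<integral>w. emp_risk l n w s \<partial>K s) = (1 / real n) * (\<Sum>i<n. Qi i s)" .
  qed
  also have "\<dots> = (1 / real n) * (\<integral>s. (\<Sum>i<n. Qi i s) \<partial>P)" by simp
  also have "(\<integral>s. (\<Sum>i<n. Qi i s) \<partial>P) = (\<Sum>i<n. tr i)"
    unfolding tr_def
  proof (rule Bochner_Integration.integral_sum)
    fix i assume "i \<in> {..<n}"
    then have i: "i < n" by simp
    show "integrable P (Qi i)"
      by (rule prob_integrable_bound[OF P_prob Qi_meas[OF i]]) (rule Qi_bound[OF i])
  qed
  finally show ?thesis .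
qed

end

theorem lemma4:
  fixes \<mu> :: "'z measure" and Wm :: "'w measure" and n :: nat
    and K :: "(nat \<Rightarrow> 'z) \<Rightarrow> 'w measure" and l :: "'w \<Rightarrow> 'z \<Rightarrow> real"
    and \<gamma> C1 :: real
  assumes "prob_space \<mu>"
    and "n > 0"
    and "K \<in> sample_space \<mu> n \<rightarrow>\<^sub>M prob_algebra Wm"
    and "(\<lambda>(w, z). l w z) \<in> borel_measurable (Wm \<Otimes>\<^sub>M \<mu>)"
    and "\<And>w z. w \<in> space Wm \<Longrightarrow> z \<in> space \<mu> \<Longrightarrow> l w z \<in> {0, 1}"
    and "0 < \<gamma>" and "\<gamma> < 1"
    and "C1 > 0"
  shows "gen_err \<mu> Wm n K l - C1 * gamma_var \<mu> Wm n K l \<gamma>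
    \<le> (2 + C1 * \<gamma>\<^sup>2) / real n *
       (\<Sum>i<n. \<integral>zuw. ((if snd (fst zuw) i then 1 else -1) - C1 * \<gamma>\<^sup>2 / (C1 * \<gamma>\<^sup>2 + 2))
                      * l (snd zuw) (fst (fst (fst zuw) i)) \<partial>joint_ZUW \<mu> Wm n K)"
proof -
  interpret setting \<mu> Wm n K l
    by (rule setting.intro[OF assms(1-5)])
  define a where "a = C1 * \<gamma>\<^sup>2"
  define c where "c = C1 * \<gamma>\<^sup>2 / (C1 * \<gamma>\<^sup>2 + 2)"
  define pop where "pop = pop_risk \<mu> Wm n K l"
  define trn where "trn = train_risk \<mu> Wm n K l"
  define gv where "gv = gamma_var \<mu> Wm n K l \<gamma>"
  have a0: "0 \<le> a" unfolding a_def using assms(8) by simp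
  have ca: "c = a / (a + 2)" unfolding c_def a_def ..
  have e1: "(2 + a) * (1 - c) = 2" unfolding ca using a0 by (simp add: field_simps)
  have e2: "(2 + a) * (1 + c) = 2 + 2 * a" unfolding ca using a0 by (simp add: field_simps)
  have n0: "real n > 0" using assms(2) by simp
  have str: "(\<Sum>i<n. tr i) = real n * trn" unfolding trn_def train_tr using n0 by simp
  have "(\<Sum>i<n. \<integral>zuw. ((if snd (fst zuw) i then 1 else -1) - C1 * \<gamma>\<^sup>2 / (C1 * \<gamma>\<^sup>2 + 2))
                      * l (snd zuw) (fst (fst (fst zuw) i)) \<partial>joint_ZUW \<mu> Wm n K)
      = (\<Sum>i<n. (1/2) * ((1 - c) * pop) + (1/2) * ((-1 - c) * tr i))"
    unfolding c_def pop_def by (rule sum.cong[OF refl]) (rule T_eq, simp)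
  also have "\<dots> = real n * ((1/2) * ((1 - c) * pop)) + (1/2) * (-1 - c) * (\<Sum>i<n. tr i)"
    by (simp add: sum.distrib sum_distrib_left mult.assoc)
  also have "\<dots> = real n * ((1/2) * ((1 - c) * pop) + (1/2) * (-1 - c) * trn)"
    unfolding str by (simp add: algebra_simps)
  finally have S: "(\<Sum>i<n. \<integral>zuw. ((if snd (fst zuw) i then 1 else -1) - C1 * \<gamma>\<^sup>2 / (C1 * \<gamma>\<^sup>2 + 2))
                      * l (snd zuw) (fst (fst (fst zuw) i)) \<partial>joint_ZUW \<mu> Wm n K)
      = real n * ((1/2) * ((1 - c) * pop) + (1/2) * (-1 - c) * trn)" .
  have R: "(2 + C1 * \<gamma>\<^sup>2) / real n * (real n * ((1/2) * ((1 - c) * pop) + (1/2) * (-1 - c) * trn))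
      = pop - (1 + a) * trn"
  proof -
    have "(2 + C1 * \<gamma>\<^sup>2) / real n * (real n * ((1/2) * ((1 - c) * pop) + (1/2) * (-1 - c) * trn))
        = (1/2) * ((2 + a) * (1 - c)) * pop - (1/2) * ((2 + a) * (1 + c)) * trn"
      unfolding a_def using n0 by (simp add: field_simps)
    also have "\<dots> = pop - (1 + a) * trn" unfolding e1 e2 by (simp add: algebra_simps)
    finally show ?thesis .
  qed
  have g2: "\<gamma>\<^sup>2 \<le> 1" using assms(6,7) by (simp add: power_le_one)
  have gv: "\<gamma>\<^sup>2 * trn \<le> gv" unfolding gv_def trn_def by (rule gvar_ge[OF g2])
  have "C1 * (\<gamma>\<^sup>2 * trn) \<le> C1 * gv" using gv assms(8) by simp
  then have "pop - trn - C1 * gv \<le> pop - (1 + a) * trn" unfolding a_def by (simp add: algebra_simps)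
  then show ?thesis unfolding S R gen_err_def pop_def[symmetric] trn_def[symmetric] gv_def[symmetric] .
qed


end
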